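(* Let $(X,S)$ be an association scheme with the trivial partition $S=\{\mathbf{1},\sigma\}$, where $\mathbf{1}=\{(x,x)\mid x\in X\}$ and $\sigma=(X\times X)\setminus\mathbf{1}$. Then every self-homotopy equivalence of the quasi-schemoid $\jmath(X,S)$ is an isomorphism.
   Context: An association scheme is a pair $(X,S)$ with $X$ a finite set and $S$ a partition of $X\times X$ containing $1_X=\{(x,x)\mid x\in X\}$, closed under $g\mapsto g^*=\{(y,x)\mid(x,y)\in g\}$, such that for all $e,f,g\in S$ the number $\sharp\{y\in X\mid(x,y)\in e,(y,z)\in f\}$ is the same for all $(x,z)\in g$. The quasi-schemoid $\jmath(X,S)=(\mathcal{C},S)$ has $ob(\mathcal{C})=X$, $\mathrm{Hom}_{\mathcal{C}}(y,x)=\{(x,y)\}$, composition $(z,x)\circ(x,y)=(z,y)$, and partition $S$ of $mor(\mathcal{C})=X\times X$. A quasi-schemoid is a small category with a partition of its morphisms satisfying: for blocks $\sigma,\tau,\mu$ and $f,g\in\mu$ the number of composable pairs $(a,b)\in\sigma\times\tau$ with $a\circ b=f$ equals that with $a\circ b=g$. A morphism of quasi-schemoids is a functor sending each block of the source partition into some block of the target partition. Product: $(\mathcal{C},S)\times(\mathcal{E},S')=(\mathcal{C}\times\mathcal{E},\{\sigma\times\tau\})$. $[1]$ has objects $0,1$ and one non-identity morphism $0\to1$; $I=([1],\{\{f\}\}_{f})$. A homotopy $H\colon F\Rightarrow G$ is a morphism $H\colon(\mathcal{C},S)\times I\to(\mathcal{D},S')$ with $H\circ\varepsilon_0=F$,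 $H\circ\varepsilon_1=G$ ($\varepsilon_i(a)=(a,i)$, $\varepsilon_i(f)=(f,1_i)$). $F\sim G$ if there is a homotopy $F\Rightarrow G$ or $G\Rightarrow F$; $F\simeq G$ if there is a finite chain $F=F_0\sim\cdots\sim F_n=G$. A self-homotopy equivalence of $A$ is a morphism $F\colon A\to A$ for which there exists $G\colon A\to A$ with $FG\simeq1$ and $GF\simeq1$. *)

theory Defs
  imports Main
begin

definition is_partition :: "'a set \<Rightarrow> 'a set set \<Rightarrow> bool" where
  "is_partition U P \<longleftrightarrow> (\<forall>B\<in>P. B \<noteq> {} \<and> B \<subseteq> U) \<and> \<Union>P = U \<and>
     (\<forall>B\<in>P. \<forall>C\<in>P. B \<noteq> C \<longrightarrow> B \<inter> C = {})"

definition assoc_scheme :: "'a set \<Rightarrow> ('a \<times> 'a) set set \<Rightarrow> bool" where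
  "assoc_scheme X S \<longleftrightarrow> finite X \<and> is_partition (X \<times> X) S \<and> Id_on X \<in> S \<and>
     (\<forall>g\<in>S. converse g \<in> S) \<and>
     (\<forall>e\<in>S. \<forall>f\<in>S. \<forall>g\<in>S. \<forall>p\<in>g. \<forall>q\<in>g.
        card {y\<in>X. (fst p, y) \<in> e \<and> (y, snd p) \<in> f} =
        card {y\<in>X. (fst q, y) \<in> e \<and> (y, snd q) \<in> f})"

(* The trivial partition {1, sigma} (sigma omitted when empty, i.e. |X| = 1). *)
definition trivial_part :: "'a set \<Rightarrow> ('a \<times> 'a) set set" where
  "trivial_part X = {Id_on X, (X \<times> X) - Id_on X} - {{}}"

(* Thin quasi-schemoids: a category in which every Hom-set has at most one element.
   A morphism y -> x is encoded as the pair (x, y) (so Hom(y,x) = {(x,y)}, as for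
   jmath(X,S)); composition is (z,x) o (x,y) = (z,y), identities are (x,x).
   A functor F between thin categories is determined by its object map:
   it sends the morphism (a,b) to the unique morphism (F a, F b).  *)
definition qs_morph ::
  "'o set \<Rightarrow> ('o \<times> 'o) set \<Rightarrow> ('o \<times> 'o) set set \<Rightarrow>
   'p set \<Rightarrow> ('p \<times> 'p) set \<Rightarrow> ('p \<times> 'p) set set \<Rightarrow> ('o \<Rightarrow> 'p) \<Rightarrow> bool" where
  "qs_morph Ob Mor P Ob' Mor' P' F \<longleftrightarrow>
     (\<forall>a\<in>Ob. F a \<in> Ob') \<and> (\<forall>(a,b)\<in>Mor. (F a, F b) \<in> Mor') \<and>
     (\<forall>B\<in>P. \<exists>B'\<in>P'. \<forall>(a,b)\<in>B. (F a, F b) \<in> B')"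

definition prod_mor :: "('o \<times> 'o) set \<Rightarrow> ('q \<times> 'q) set \<Rightarrow> (('o \<times> 'q) \<times> ('o \<times> 'q)) set" where
  "prod_mor M M' = {((a,a'),(b,b')) | a b a' b'. (a,b) \<in> M \<and> (a',b') \<in> M'}"

definition prod_part :: "('o \<times> 'o) set set \<Rightarrow> ('q \<times> 'q) set set \<Rightarrow> (('o \<times> 'q) \<times> ('o \<times> 'q)) set set" where
  "prod_part P P' = {prod_mor B B' | B B'. B \<in> P \<and> B' \<in> P'}"

(* I = ([1], discrete partition): objects 0,1; morphisms 1_0=(0,0), 1_1=(1,1), 0->1 = (1,0) *)
definition I_ob :: "nat set" where "I_ob = {0,1}"
definition I_mor :: "(nat \<times> nat) set" where "I_mor = {(0,0),(1,1),(1,0)}"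
definition I_part :: "(nat \<times> nat) set set" where "I_part = (\<lambda>f. {f}) ` I_mor"

(* jmath(X,S): objects X, morphisms X x X, partition S. Functors are compared
   on objects of X (F o eps_i = G as functors means equality of object maps on X). *)
definition j_morph :: "'a set \<Rightarrow> ('a \<times> 'a) set set \<Rightarrow> ('a \<Rightarrow> 'a) \<Rightarrow> bool" where
  "j_morph X S F \<longleftrightarrow> qs_morph X (X \<times> X) S X (X \<times> X) S F"

definition j_homotopy :: "'a set \<Rightarrow> ('a \<times> 'a) set set \<Rightarrow> ('a \<Rightarrow> 'a) \<Rightarrow> ('a \<Rightarrow> 'a) \<Rightarrow> ('a \<times> nat \<Rightarrow> 'a) \<Rightarrow> bool" where
  "j_homotopy X S F G H \<longleftrightarrow>
     qs_morph (X \<times> I_ob) (prod_mor (X \<times> X) I_mor) (prod_part S I_part) X (X \<times> X) S H \<and>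
     (\<forall>x\<in>X. H (x, 0) = F x) \<and> (\<forall>x\<in>X. H (x, 1) = G x)"

definition j_htp_step :: "'a set \<Rightarrow> ('a \<times> 'a) set set \<Rightarrow> ('a \<Rightarrow> 'a) \<Rightarrow> ('a \<Rightarrow> 'a) \<Rightarrow> bool" where
  "j_htp_step X S F G \<longleftrightarrow> (\<exists>H. j_homotopy X S F G H) \<or> (\<exists>H. j_homotopy X S G F H)"

definition j_homotopic :: "'a set \<Rightarrow> ('a \<times> 'a) set set \<Rightarrow> ('a \<Rightarrow> 'a) \<Rightarrow> ('a \<Rightarrow> 'a) \<Rightarrow> bool" where
  "j_homotopic X S = (j_htp_step X S)\<^sup>*\<^sup>*"

definition j_self_heq :: "'a set \<Rightarrow> ('a \<times> 'a) set set \<Rightarrow> ('a \<Rightarrow> 'a) \<Rightarrow> bool" where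
  "j_self_heq X S F \<longleftrightarrow> j_morph X S F \<and>
     (\<exists>G. j_morph X S G \<and> j_homotopic X S (F \<circ> G) id \<and> j_homotopic X S (G \<circ> F) id)"

definition j_iso :: "'a set \<Rightarrow> ('a \<times> 'a) set set \<Rightarrow> ('a \<Rightarrow> 'a) \<Rightarrow> bool" where
  "j_iso X S F \<longleftrightarrow> j_morph X S F \<and>
     (\<exists>G. j_morph X S G \<and> (\<forall>x\<in>X. G (F x) = x) \<and> (\<forall>x\<in>X. F (G x) = x))"

end

theory Submission
  imports Defs
begin

lemma tp_diag:
  assumes "B \<in> trivial_part X" "(u,u) \<in> B" "(v,w) \<in> B" shows "v = w"
  using assms by (auto simp: trivial_part_def Id_on_def)

lemma blk:
  assumes "qs_morph Ob M (prod_part S I_part) X (X\<times>X) S H" "B \<in> S" "f \<in> I_mor"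
  shows "\<exists>B'\<in>S. \<forall>p q. (p,q) \<in> prod_mor B {f} \<longrightarrow> (H p, H q) \<in> B'"
proof -
  have "prod_mor B {f} \<in> prod_part S I_part"
    using assms(2,3) unfolding prod_part_def I_part_def by blast
  then obtain B' where "B'\<in>S" "\<forall>(p,q)\<in>prod_mor B {f}. (H p, H q) \<in> B'"
    using assms(1) unfolding qs_morph_def by blast
  then show ?thesis by blast
qed

lemma surj_F:
  assumes "finite X" "inj_on F X" "F ` X \<subseteq> X" shows "F ` X = X"
  using assms by (simp add: card_image card_subset_eq)

lemma key:
  assumes "finite X" "inj_on F X" "F ` X \<subseteq> X" "c \<in> X" "a \<in> X" "a' \<in> X" "a \<noteq> a'"
    "B' \<in> trivial_part X"
    "\<forall>x\<in>X. \<forall>y\<in>X. x \<noteq> y \<longrightarrow> (c, F y) \<in> B' \<or> (F y, c) \<in> B'"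
    "(\<forall>x\<in>X. \<forall>y\<in>X. x \<noteq> y \<longrightarrow> (c, F y) \<in> B') \<or> (\<forall>x\<in>X. \<forall>y\<in>X. x \<noteq> y \<longrightarrow> (F y, c) \<in> B')"
  shows False
proof -
  have "F ` X = X" using surj_F assms by blast
  then obtain y1 where y1: "y1 \<in> X" "F y1 = c" using assms(4) by force
  obtain y2 where y2: "y2 \<in> X" "y2 \<noteq> y1" using assms(5,6,7) by metis
  obtain x1 where x1: "x1 \<in> X" "x1 \<noteq> y1" using assms(5,6,7) by metis
  have "F y2 \<noteq> c" using assms(2) y1 y2 by (metis inj_on_def)
  from assms(10) show False
  proof
    assume h: "\<forall>x\<in>X. \<forall>y\<in>X. x \<noteq> y \<longrightarrow> (c, F y) \<in> B'"
    have "(c,c) \<in> B'" using h x1 y1 by metis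
    moreover have "(c, F y2) \<in> B'" using h y1 y2 by metis
    ultimately show False using tp_diag[OF assms(8)] \<open>F y2 \<noteq> c\<close> by metis
  next
    assume h: "\<forall>x\<in>X. \<forall>y\<in>X. x \<noteq> y \<longrightarrow> (F y, c) \<in> B'"
    have "(c,c) \<in> B'" using h x1 y1 by metis
    moreover have "(F y2, c) \<in> B'" using h y1 y2 by metis
    ultimately show False using tp_diag[OF assms(8)] \<open>F y2 \<noteq> c\<close> by metis
  qed
qed

lemma sig_in: "a \<in> X \<Longrightarrow> a' \<in> X \<Longrightarrow> a \<noteq> a' \<Longrightarrow> X \<times> X - Id_on X \<in> trivial_part X"
  by (auto simp: trivial_part_def)

lemma htp_inj:
  assumes fin: "finite X" and H: "j_homotopy X (trivial_part X) F G H"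
  shows "inj_on F X \<longleftrightarrow> inj_on G X"
proof -
  let ?S = "trivial_part X"
  have qm: "qs_morph (X \<times> I_ob) (prod_mor (X \<times> X) I_mor) (prod_part ?S I_part) X (X \<times> X) ?S H"
    and H0: "\<forall>x\<in>X. H (x, 0) = F x" and H1: "\<forall>x\<in>X. H (x, 1) = G x"
    using H unfolding j_homotopy_def by auto
  have hx: "\<forall>p\<in>X \<times> I_ob. H p \<in> X" using qm unfolding qs_morph_def by blast
  have FX: "F ` X \<subseteq> X"
  proof
    fix z assume "z \<in> F ` X"
    then obtain x where "x \<in> X" "z = F x" by blast
    thus "z \<in> X" using hx H0 unfolding I_ob_def by force
  qed
  have GX: "G ` X \<subseteq> X"
  proof
    fix z assume "z \<in> G ` X"
    then obtain x where "x \<in> X" "z = G x" by blast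
    thus "z \<in> X" using hx H1 unfolding I_ob_def by force
  qed
  have gen: "\<And>F G (i::nat) j. F ` X \<subseteq> X \<Longrightarrow> G ` X \<subseteq> X \<Longrightarrow> (i,j) \<in> {(0,1),(1,0)} \<Longrightarrow>
     \<forall>x\<in>X. H (x, i) = F x \<Longrightarrow> \<forall>x\<in>X. H (x, j) = G x \<Longrightarrow> inj_on F X \<Longrightarrow> inj_on G X"
  proof (rule ccontr)
    fix F' G' :: "'a \<Rightarrow> 'a" and i j :: nat
    assume FX: "F' ` X \<subseteq> X" and GX: "G' ` X \<subseteq> X" and ij: "(i,j) \<in> {(0,1),(1,0)}"
      and Hi: "\<forall>x\<in>X. H (x, i) = F' x" and Hj: "\<forall>x\<in>X. H (x, j) = G' x"
      and inF: "inj_on F' X" and ninG: "\<not> inj_on G' X"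
    obtain a a' where aa: "a \<in> X" "a' \<in> X" "a \<noteq> a'" "G' a = G' a'"
      using ninG unfolding inj_on_def by blast
    have sig: "X \<times> X - Id_on X \<in> ?S" by (rule sig_in[OF aa(1) aa(2) aa(3)])
    have jj: "(j,j) \<in> I_mor" using ij unfolding I_mor_def by auto
    obtain B1 where B1: "B1 \<in> ?S" "\<forall>p q. (p,q) \<in> prod_mor (X \<times> X - Id_on X) {(j,j)} \<longrightarrow> (H p, H q) \<in> B1"
      using blk[OF qm sig jj] by blast
    have m: "((a,j),(a',j)) \<in> prod_mor (X \<times> X - Id_on X) {(j,j)}"
      using aa unfolding prod_mor_def by auto
    have "(H (a,j), H (a',j)) \<in> B1" using B1(2) m by blast
    hence "(G' a, G' a) \<in> B1" using Hj aa by simp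
    hence const: "\<And>x y. x \<in> X \<Longrightarrow> y \<in> X \<Longrightarrow> G' x = G' y"
    proof -
      fix x y assume x: "x \<in> X" and y: "y \<in> X" and d: "(G' a, G' a) \<in> B1"
      show "G' x = G' y"
      proof (cases "x = y")
        case False
        have "((x,j),(y,j)) \<in> prod_mor (X \<times> X - Id_on X) {(j,j)}"
          using x y False unfolding prod_mor_def by auto
        hence "(H (x,j), H (y,j)) \<in> B1" using B1(2) by blast
        hence "(G' x, G' y) \<in> B1" using Hj x y by simp
        thus ?thesis using tp_diag[OF B1(1) d] by blast
      qed simp
    qed
    define c where "c = G' a"
    have c: "c \<in> X" using GX aa c_def by auto
    have gc: "\<forall>x\<in>X. G' x = c" using const aa c_def by blast
    show False
    proof (cases "(i,j) = (0,1)")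
      case True
      hence ij': "i = 0" "j = 1" by auto
      obtain B2 where B2: "B2 \<in> ?S" "\<forall>p q. (p,q) \<in> prod_mor (X \<times> X - Id_on X) {(1,0)} \<longrightarrow> (H p, H q) \<in> B2"
        using blk[OF qm sig] unfolding I_mor_def by blast
      have "\<forall>x\<in>X. \<forall>y\<in>X. x \<noteq> y \<longrightarrow> (c, F' y) \<in> B2"
      proof (intro ballI impI)
        fix x y assume "x \<in> X" "y \<in> X" "x \<noteq> y"
        hence "((x,1),(y,0)) \<in> prod_mor (X \<times> X - Id_on X) {(1,0)}"
          unfolding prod_mor_def by auto
        hence "(H (x,1), H (y,0)) \<in> B2" using B2(2) by blast
        thus "(c, F' y) \<in> B2" using Hi Hj gc ij' \<open>x \<in> X\<close> \<open>y \<in> X\<close> by simp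
      qed
      thus False using key[OF fin inF FX c aa(1-3) B2(1)] by blast
    next
      case False
      hence ij': "i = 1" "j = 0" using ij by auto
      obtain B2 where B2: "B2 \<in> ?S" "\<forall>p q. (p,q) \<in> prod_mor (X \<times> X - Id_on X) {(1,0)} \<longrightarrow> (H p, H q) \<in> B2"
        using blk[OF qm sig] unfolding I_mor_def by blast
      have "\<forall>x\<in>X. \<forall>y\<in>X. x \<noteq> y \<longrightarrow> (F' y, c) \<in> B2"
      proof (intro ballI impI)
        fix x y assume "x \<in> X" "y \<in> X" "x \<noteq> y"
        hence "((y,1),(x,0)) \<in> prod_mor (X \<times> X - Id_on X) {(1,0)}"
          unfolding prod_mor_def by auto
        hence "(H (y,1), H (x,0)) \<in> B2" using B2(2) by blast
        thus "(F' y, c) \<in> B2" using Hi Hj gc ij' \<open>x \<in> X\<close> \<open>y \<in> X\<close> by simp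
      qed
      thus False using key[OF fin inF FX c aa(1-3) B2(1)] by blast
    qed
  qed
  show ?thesis
    using gen[OF FX GX _ H0 H1] gen[OF GX FX _ H1 H0] by auto
qed

lemma homotopic_inj:
  assumes fin: "finite X" and h: "j_homotopic X (trivial_part X) F G"
  shows "inj_on F X \<longleftrightarrow> inj_on G X"
  using h unfolding j_homotopic_def
proof (induction rule: rtranclp_induct)
  case base then show ?case by simp
next
  case (step y z)
  then show ?case using htp_inj[OF fin] unfolding j_htp_step_def by blast
qed

theorem lemma4p1:
  fixes X :: "'a set" and F :: "'a \<Rightarrow> 'a"
  assumes "assoc_scheme X (trivial_part X)"
    and "j_self_heq X (trivial_part X) F"
  shows "j_iso X (trivial_part X) F"
proof -
  have fin: "finite X" using assms(1) unfolding assoc_scheme_def by simp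
  have mF: "j_morph X (trivial_part X) F" using assms(2) unfolding j_self_heq_def by simp
  obtain G where mG: "j_morph X (trivial_part X) G" and h: "j_homotopic X (trivial_part X) (F \<circ> G) id"
    using assms(2) unfolding j_self_heq_def by blast
  have FX: "F ` X \<subseteq> X" using mF unfolding j_morph_def qs_morph_def by auto
  have GX: "G ` X \<subseteq> X" using mG unfolding j_morph_def qs_morph_def by auto
  have "inj_on (F \<circ> G) X" using homotopic_inj[OF fin h] by simp
  hence iG: "inj_on G X" using inj_on_imageI2 by blast
  have "G ` X = X" using surj_F[OF fin iG GX] .
  have "inj_on F (G ` X)" using \<open>inj_on (F \<circ> G) X\<close> by (rule inj_on_imageI)
  hence iF: "inj_on F X" using \<open>G ` X = X\<close> by simp
  have sF: "F ` X = X" using surj_F[OF fin iF FX] .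
  define K where "K = inv_into X F"
  have K1: "\<forall>x\<in>X. K (F x) = x" using iF K_def by simp
  have K2: "\<forall>x\<in>X. F (K x) = x" using sF K_def by (simp add: f_inv_into_f)
  have KX: "\<forall>x\<in>X. K x \<in> X" using sF K_def by (metis inv_into_into)
  have iK: "\<forall>x\<in>X. \<forall>y\<in>X. K x = K y \<longrightarrow> x = y" using K2 by metis
  have mK: "j_morph X (trivial_part X) K"
    unfolding j_morph_def qs_morph_def
  proof (intro conjI ballI)
    fix a assume "a \<in> X" thus "K a \<in> X" using KX by simp
  next
    fix p assume "p \<in> X \<times> X" thus "case p of (a,b) \<Rightarrow> (K a, K b) \<in> X \<times> X" using KX by auto
  next
    fix B assume B: "B \<in> trivial_part X"
    have "B = Id_on X \<or> (B = X \<times> X - Id_on X \<and> B \<noteq> {})" using B unfolding trivial_part_def by blast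
    thus "\<exists>B'\<in>trivial_part X. \<forall>(a, b)\<in>B. (K a, K b) \<in> B'"
    proof
      assume "B = Id_on X"
      moreover have "Id_on X \<in> trivial_part X" using B \<open>B = Id_on X\<close> unfolding trivial_part_def by blast
      ultimately show ?thesis using KX by (intro bexI[of _ "Id_on X"]) auto
    next
      assume h: "B = X \<times> X - Id_on X \<and> B \<noteq> {}"
      hence "X \<times> X - Id_on X \<in> trivial_part X" unfolding trivial_part_def by blast
      moreover have "\<forall>(a, b)\<in>B. (K a, K b) \<in> X \<times> X - Id_on X"
      proof (intro ballI, clarify)
        fix a b assume "(a,b) \<in> B"
        hence ab: "a \<in> X" "b \<in> X" "a \<noteq> b" using h by auto
        hence "K a \<noteq> K b" using iK by blast
        thus "(K a, K b) \<in> X \<times> X - Id_on X" using KX ab by auto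
      qed
      ultimately show ?thesis by blast
    qed
  qed
  show ?thesis unfolding j_iso_def using mF mK K1 K2 by blast
qed

end
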